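(* Let $n\ge 1$, let $x^*\in\{0,1\}^n$, and let $\mathcal{D}$ be a finite nonempty background dataset of pairs $(x,y)$ with $x\in\{0,1\}^n$. Fix $f\in\{0,1\}^n$ and let $\Psi_f(x)=(-1)^{\langle f,x\rangle}$. Then for every $i\in[n]$, the SHAP value of $\Psi_f$ at $x^*$ with respect to $\mathcal{D}$ is $$\phi_i^{\Psi_f} \;=\; -\frac{2f_i}{|\mathcal{D}|}\sum_{(x,y)\in\mathcal{D}} \mathbb{1}_{x_i\neq x^*_i}\,(-1)^{\langle f,x\rangle}\,\frac{(|A|+1)\bmod 2}{|A|+1},$$ where $A=A(x)\triangleq\{j\in[n]\;:\; x_j\neq x^*_j,\ j\neq i,\ f_j=1\}$.
   Context: $[n]=\{1,\dots,n\}$ is the set of features and $\langle f,x\rangle=\sum_j f_jx_j$. For $S\subseteq[n]$ and $x,x^*\in\{0,1\}^n$, $x^*_S\oplus x_{[n]\setminus S}$ (also written $(x^*_S,x_{[n]\setminus S})$) denotes the vector $z\in\{0,1\}^n$ with $z_j=x^*_j$ for $j\in S$ and $z_j=x_j$ for $j\notin S$. For a function $h:\{0,1\}^n\to\mathbb{R}$, the value function is $v_h(S)=\frac{1}{|\mathcal{D}|}\sum_{(x,y)\in\mathcal{D}} h(x^*_S\oplus x_{[n]\setminus S})$ (sum over the dataset counted with multiplicity), and the SHAP value of feature $i$ is $\phi_i^h=\sum_{S\subseteq[n]\setminus\{i\}}\frac{|S|!\,(n-|S|-1)!}{n!}\bigl(v_h(S\cup\{i\})-v_h(S)\bigr)$.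 $\mathbb{1}_{x_i\neq x^*_i}$ is $1$ if $x_i\neq x^*_i$ and $0$ otherwise. *)

theory Defs
  imports Complex_Main "HOL-Library.Multiset"
begin

text \<open>Binary vectors in {0,1}^n are functions nat => nat; only the coordinates 1..n matter.\<close>

definition binvec :: "nat \<Rightarrow> (nat \<Rightarrow> nat) \<Rightarrow> bool" where
  "binvec n x \<longleftrightarrow> (\<forall>j\<in>{1..n}. x j \<in> {0,1})"

definition inner_bin :: "nat \<Rightarrow> (nat \<Rightarrow> nat) \<Rightarrow> (nat \<Rightarrow> nat) \<Rightarrow> nat" where
  "inner_bin n f x = (\<Sum>j\<in>{1..n}. f j * x j)"

definition Psi :: "nat \<Rightarrow> (nat \<Rightarrow> nat) \<Rightarrow> (nat \<Rightarrow> nat) \<Rightarrow> real" where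
  "Psi n f x = (-1) ^ inner_bin n f x"

definition merge :: "nat set \<Rightarrow> (nat \<Rightarrow> nat) \<Rightarrow> (nat \<Rightarrow> nat) \<Rightarrow> (nat \<Rightarrow> nat)" where
  "merge S xs x = (\<lambda>j. if j \<in> S then xs j else x j)"

definition vfun :: "(nat \<Rightarrow> nat) \<Rightarrow> ((nat \<Rightarrow> nat) \<times> 'b) multiset \<Rightarrow>
    ((nat \<Rightarrow> nat) \<Rightarrow> real) \<Rightarrow> nat set \<Rightarrow> real" where
  "vfun xs D h S = (\<Sum>\<^sub># (image_mset (\<lambda>(x, y). h (merge S xs x)) D)) / real (size D)"

definition shap :: "nat \<Rightarrow> (nat \<Rightarrow> nat) \<Rightarrow> ((nat \<Rightarrow> nat) \<times> 'b) multiset \<Rightarrow>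
    ((nat \<Rightarrow> nat) \<Rightarrow> real) \<Rightarrow> nat \<Rightarrow> real" where
  "shap n xs D h i = (\<Sum>S\<in>Pow ({1..n} - {i}).
      fact (card S) * fact (n - card S - 1) / fact n
      * (vfun xs D h (insert i S) - vfun xs D h S))"

end

theory Submission
  imports Defs
begin


definition w :: "nat \<Rightarrow> nat \<Rightarrow> real" where
  "w m s = fact s * fact (m - s) / fact (m+1)"

definition G :: "nat set \<Rightarrow> nat set \<Rightarrow> real" where
  "G M A = (\<Sum>S\<in>Pow M. w (card M) (card S) * (-1)^card (S \<inter> A))"

lemma w_step: "s \<le> m \<Longrightarrow> w (Suc m) s + w (Suc m) (Suc s) = w m s"
proof -
  assume sm: "s \<le> m"
  define a where "a = (fact s :: real)"
  define b where "b = (fact (m - s) :: real)"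
  define F where "F = (fact (Suc m) :: real)"
  have F0: "F > 0" unfolding F_def by simp
  have 1: "w (Suc m) s = a * (real (m - s + 1) * b) / (real (m + 2) * F)"
    unfolding w_def a_def b_def F_def using sm
    by (simp add: Suc_diff_le fact_Suc)
  have 2: "w (Suc m) (Suc s) = (real (s+1) * a) * b / (real (m + 2) * F)"
    unfolding w_def a_def b_def F_def using sm by (simp add: fact_Suc)
  have 3: "w m s = a * b / F" unfolding w_def a_def b_def F_def by simp
  have 4: "real (m - s + 1) + real (s + 1) = real (m + 2)" using sm by simp
  have "w (Suc m) s + w (Suc m) (Suc s) = a * b * (real (m - s + 1) + real (s + 1)) / (real (m + 2) * F)"
    unfolding 1 2 by (simp add: add_divide_distrib[symmetric] algebra_simps)
  also have "\<dots> = a * b / F" unfolding 4 using F0 by simp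
  finally show ?thesis using 3 by simp
qed

lemma G_ext: "finite C \<Longrightarrow> finite A \<Longrightarrow> A \<inter> C = {} \<Longrightarrow> G (A \<union> C) A = G A A"
proof (induction C rule: finite_induct)
  case empty
  then show ?case by simp
next
  case (insert e C)
  let ?M = "A \<union> C"
  have fin: "finite ?M" using insert by simp
  have eM: "e \<notin> ?M" using insert by auto
  have eA: "e \<notin> A" using insert by auto
  have cM: "card (insert e ?M) = Suc (card ?M)" using fin eM by simp
  have dis: "Pow ?M \<inter> insert e ` Pow ?M = {}" using eM by auto
  have inj: "inj_on (insert e) (Pow ?M)"
  proof (rule inj_onI)
    fix x y assume "x \<in> Pow ?M" "y \<in> Pow ?M" "insert e x = insert e y"
    then have "e \<notin> x" "e \<notin> y" using eM by auto
    then show "x = y" using \<open>insert e x = insert e y\<close> by (metis Diff_insert_absorb)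
  qed
  have "G (A \<union> insert e C) A = G (insert e ?M) A" by simp
  also have "\<dots> = (\<Sum>S\<in>Pow ?M. w (Suc (card ?M)) (card S) * (-1)^card (S \<inter> A))
      + (\<Sum>S\<in>insert e ` Pow ?M. w (Suc (card ?M)) (card S) * (-1)^card (S \<inter> A))"
    unfolding G_def cM Pow_insert using fin dis by (simp add: sum.union_disjoint)
  also have "(\<Sum>S\<in>insert e ` Pow ?M. w (Suc (card ?M)) (card S) * (-1)^card (S \<inter> A))
     = (\<Sum>S\<in>Pow ?M. w (Suc (card ?M)) (Suc (card S)) * (-1)^card (S \<inter> A))"
  proof (subst sum.reindex[OF inj], rule sum.cong)
    fix S assume "S \<in> Pow ?M"
    then have "finite S" "e \<notin> S" using fin eM finite_subset by auto
    moreover have "insert e S \<inter> A = S \<inter> A" using eA by auto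
    ultimately show "((\<lambda>S. w (Suc (card ?M)) (card S) * (-1) ^ card (S \<inter> A)) \<circ> insert e) S =
         w (Suc (card ?M)) (Suc (card S)) * (-1) ^ card (S \<inter> A)" by simp
  qed simp
  also have "(\<Sum>S\<in>Pow ?M. w (Suc (card ?M)) (card S) * (-1)^card (S \<inter> A))
      + (\<Sum>S\<in>Pow ?M. w (Suc (card ?M)) (Suc (card S)) * (-1)^card (S \<inter> A))
      = (\<Sum>S\<in>Pow ?M. w (card ?M) (card S) * (-1)^card (S \<inter> A))"
    unfolding sum.distrib[symmetric]
  proof (rule sum.cong)
    fix S assume "S \<in> Pow ?M"
    then have "card S \<le> card ?M" using fin by (simp add: card_mono)
    then show "w (Suc (card ?M)) (card S) * (-1)^card (S \<inter> A) + w (Suc (card ?M)) (Suc (card S)) * (-1)^card (S \<inter> A)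
       = w (card ?M) (card S) * (-1)^card (S \<inter> A)"
      using w_step[of "card S" "card ?M"] by (metis distrib_right)
  qed simp
  also have "\<dots> = G A A" using insert G_def by simp
  finally show ?case .
qed

lemma alt_sum: "(\<Sum>k\<in>{0..a}. (-1::real)^k) = (if even a then 1 else 0)"
  by (induction a) auto

lemma G_base: assumes "finite A"
  shows "G A A = (if even (card A) then 1 / real (card A + 1) else 0)"
proof -
  let ?a = "card A"
  have "G A A = (\<Sum>S\<in>Pow A. w ?a (card S) * (-1)^card S)"
    unfolding G_def by (intro sum.cong) (auto simp: Int_absorb2)
  also have "\<dots> = (\<Sum>k\<in>{0..?a}. \<Sum>S\<in>{S\<in>Pow A. card S = k}. w ?a (card S) * (-1)^card S)"
    by (rule sum.group[symmetric]) (use assms card_mono in auto)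
  also have "\<dots> = (\<Sum>k\<in>{0..?a}. (-1)^k / real (?a + 1))"
  proof (rule sum.cong)
    fix k assume k: "k \<in> {0..?a}"
    have "(\<Sum>S\<in>{S\<in>Pow A. card S = k}. w ?a (card S) * (-1)^card S)
        = (\<Sum>S\<in>{S\<in>Pow A. card S = k}. w ?a k * (-1)^k)" by (rule sum.cong) auto
    also have "\<dots> = real (?a choose k) * (w ?a k * (-1)^k)"
      using n_subsets[OF assms, of k] by simp
    also have "\<dots> = (-1)^k / real (?a + 1)"
    proof -
      have "fact k * fact (?a - k) * real (?a choose k) = fact ?a"
        using binomial_fact_lemma[of k ?a] k by (metis atLeastAtMost_iff of_nat_fact of_nat_mult)
      moreover have "(fact (?a + 1) :: real) = real (?a + 1) * fact ?a" by (simp add: fact_Suc)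
      moreover have "(fact ?a :: real) > 0" by simp
      ultimately show ?thesis
      proof -
        assume h1: "fact k * fact (?a - k) * real (?a choose k) = fact ?a"
          and h2: "(fact (?a + 1) :: real) = real (?a + 1) * fact ?a" and h3: "(fact ?a :: real) > 0"
        have "real (?a choose k) * (w ?a k * (-1)^k)
            = (fact k * fact (?a - k) * real (?a choose k)) * (-1)^k / fact (?a + 1)"
          unfolding w_def by (simp only: times_divide_eq_right mult_ac)
        also have "\<dots> = fact ?a * (-1)^k / (real (?a + 1) * fact ?a)" unfolding h1 h2 ..
        also have "\<dots> = (-1)^k / real (?a + 1)" using h3 by simp
        finally show ?thesis .
      qed
    qed
    finally show "(\<Sum>S\<in>{S\<in>Pow A. card S = k}. w ?a (card S) * (-1)^card S) = (-1)^k / real (?a + 1)" .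
  qed simp
  also have "\<dots> = (\<Sum>k\<in>{0..?a}. (-1::real)^k) / real (?a + 1)"
    by (simp add: sum_divide_distrib)
  finally show ?thesis using alt_sum by simp
qed



lemma Psi_merge:
  assumes x: "binvec n x" and xs: "binvec n xs" and f: "binvec n f" and S: "S \<subseteq> {1..n}"
  shows "Psi n f (merge S xs x) = Psi n f x * (-1) ^ card (S \<inter> {j\<in>{1..n}. f j = 1 \<and> x j \<noteq> xs j})"
proof -
  let ?B = "{j\<in>{1..n}. f j = 1 \<and> x j \<noteq> xs j}"
  have 1: "Psi n f (merge S xs x) = (\<Prod>j\<in>{1..n}. (-1::real) ^ (f j * merge S xs x j))"
    unfolding Psi_def inner_bin_def by (simp add: power_sum)
  have 2: "Psi n f x = (\<Prod>j\<in>{1..n}. (-1::real) ^ (f j * x j))"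
    unfolding Psi_def inner_bin_def by (simp add: power_sum)
  have 3: "(-1::real) ^ card (S \<inter> ?B) = (\<Prod>j\<in>{1..n}. if j \<in> S \<inter> ?B then -1 else 1)"
  proof -
    have "(\<Prod>j\<in>{1..n}. if j \<in> S \<inter> ?B then -1 else (1::real)) = (\<Prod>j\<in>{1..n} \<inter> {j. j \<in> S \<inter> ?B}. -1)"
      by (simp only: prod.If_cases[OF finite_atLeastAtMost] prod.neutral_const mult_1_right)
    also have "{1..n} \<inter> {j. j \<in> S \<inter> ?B} = S \<inter> ?B" by auto
    finally have "(\<Prod>j\<in>{1..n}. if j \<in> S \<inter> ?B then -1 else (1::real)) = (\<Prod>j\<in>S \<inter> ?B. -1)" .
    then show ?thesis by (simp only: prod_constant)
  qed
  have 4: "(-1::real) ^ (f j * merge S xs x j) = (-1)^(f j * x j) * (if j \<in> S \<inter> ?B then -1 else 1)"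
    if j: "j \<in> {1..n}" for j
  proof -
    have "f j \<in> {0,1}" "x j \<in> {0,1}" "xs j \<in> {0,1}" using x xs f j unfolding binvec_def by auto
    then show ?thesis unfolding merge_def using j by auto
  qed
  show ?thesis unfolding 1 2 3 prod.distrib[symmetric] by (rule prod.cong) (auto simp: 4)
qed

lemma swap_lemma:
  fixes c :: "nat set \<Rightarrow> real"
  shows "(\<Sum>S\<in>P. c S * (\<Sum>\<^sub># (image_mset (g1 S) D) / d - \<Sum>\<^sub># (image_mset (g0 S) D) / d))
    = \<Sum>\<^sub># (image_mset (\<lambda>p. \<Sum>S\<in>P. c S * (g1 S p - g0 S p)) D) / d"
proof (induction D)
  case empty
  then show ?case by simp
next
  case (add p D)
  have "(\<Sum>S\<in>P. c S * (\<Sum>\<^sub># (image_mset (g1 S) (add_mset p D)) / d - \<Sum>\<^sub># (image_mset (g0 S) (add_mset p D)) / d))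
     = (\<Sum>S\<in>P. c S * (g1 S p - g0 S p) / d + c S * (\<Sum>\<^sub># (image_mset (g1 S) D) / d - \<Sum>\<^sub># (image_mset (g0 S) D) / d))"
    by (rule sum.cong) (simp_all add: algebra_simps add_divide_distrib diff_divide_distrib)
  also have "\<dots> = (\<Sum>S\<in>P. c S * (g1 S p - g0 S p)) / d + \<Sum>\<^sub># (image_mset (\<lambda>p. \<Sum>S\<in>P. c S * (g1 S p - g0 S p)) D) / d"
    by (simp add: sum.distrib add.IH sum_divide_distrib)
  finally show ?case by (simp add: add_divide_distrib)
qed



lemma G_full: assumes "finite M" "A \<subseteq> M"
  shows "G M A = real ((card A + 1) mod 2) / real (card A + 1)"
proof -
  have fA: "finite A" using assms finite_subset by blast
  have "M = A \<union> (M - A)" using assms by auto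
  then have "G M A = G A A" using G_ext[of "M - A" A] assms fA by auto
  also have "\<dots> = real ((card A + 1) mod 2) / real (card A + 1)"
    using G_base[OF fA] by (auto elim: evenE oddE)
  finally show ?thesis .
qed

lemma pointwise:
  assumes n: "n \<ge> 1" and x: "binvec n x" and xs: "binvec n xs" and f: "binvec n f" and i: "i \<in> {1..n}"
  shows "(\<Sum>S\<in>Pow ({1..n} - {i}). fact (card S) * fact (n - card S - 1) / fact n *
            (Psi n f (merge (insert i S) xs x) - Psi n f (merge S xs x)))
       = - 2 * real (f i) * ((if x i \<noteq> xs i then 1 else 0) * Psi n f x *
          (let A = {j \<in> {1..n}. x j \<noteq> xs j \<and> j \<noteq> i \<and> f j = 1}
           in real ((card A + 1) mod 2) / real (card A + 1)))"
proof -
  let ?B = "{j\<in>{1..n}. f j = 1 \<and> x j \<noteq> xs j}"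
  let ?A = "{j \<in> {1..n}. x j \<noteq> xs j \<and> j \<noteq> i \<and> f j = 1}"
  let ?M = "{1..n} - {i}"
  have cM: "card ?M = n - 1" using i by simp
  have fi: "f i \<in> {0,1}" using f i unfolding binvec_def by auto
  have AB: "?A = ?B - {i}" by auto
  show ?thesis
  proof (cases "i \<in> ?B")
    case True
    have "(\<Sum>S\<in>Pow ?M. fact (card S) * fact (n - card S - 1) / fact n *
            (Psi n f (merge (insert i S) xs x) - Psi n f (merge S xs x)))
        = (\<Sum>S\<in>Pow ?M. -2 * Psi n f x * (w (card ?M) (card S) * (-1) ^ card (S \<inter> ?A)))"
    proof (rule sum.cong)
      fix S assume S: "S \<in> Pow ?M"
      have S1: "S \<subseteq> {1..n}" "insert i S \<subseteq> {1..n}" "i \<notin> S" using S i by auto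
      have fS: "finite S" using S1 finite_subset by blast
      have e1: "insert i S \<inter> ?B = insert i (S \<inter> ?A)" using True S1 by auto
      have e2: "S \<inter> ?B = S \<inter> ?A" using S1 by auto
      have c1: "card (insert i S \<inter> ?B) = Suc (card (S \<inter> ?A))" unfolding e1 using fS S1 by simp
      have ww: "fact (card S) * fact (n - card S - 1) / fact n = w (card ?M) (card S)"
        unfolding w_def cM using n by (simp add: diff_diff_add)
      show "fact (card S) * fact (n - card S - 1) / fact n *
            (Psi n f (merge (insert i S) xs x) - Psi n f (merge S xs x))
          = -2 * Psi n f x * (w (card ?M) (card S) * (-1) ^ card (S \<inter> ?A))"
        unfolding ww Psi_merge[OF x xs f S1(1)] Psi_merge[OF x xs f S1(2)] c1 e2
        by (simp add: algebra_simps)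
    qed simp
    also have "\<dots> = -2 * Psi n f x * G ?M ?A"
      unfolding G_def by (simp add: sum_distrib_left)
    also have "G ?M ?A = real ((card ?A + 1) mod 2) / real (card ?A + 1)"
      by (rule G_full) auto
    finally show ?thesis using True by (simp add: Let_def)
  next
    case False
    have "(\<Sum>S\<in>Pow ?M. fact (card S) * fact (n - card S - 1) / fact n *
            (Psi n f (merge (insert i S) xs x) - Psi n f (merge S xs x))) = 0"
    proof (rule sum.neutral, rule ballI)
      fix S assume S: "S \<in> Pow ?M"
      have S1: "S \<subseteq> {1..n}" "insert i S \<subseteq> {1..n}" using S i by auto
      have e1: "insert i S \<inter> ?B = S \<inter> ?B" using False by auto
      show "fact (card S) * fact (n - card S - 1) / fact n *
            (Psi n f (merge (insert i S) xs x) - Psi n f (merge S xs x)) = 0"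
        unfolding Psi_merge[OF x xs f S1(1)] Psi_merge[OF x xs f S1(2)] e1 by simp
    qed
    moreover have "real (f i) * (if x i \<noteq> xs i then 1 else 0) = 0" using False fi i by auto
    ultimately show ?thesis by (metis (no_types, lifting) mult.assoc mult_eq_0_iff)
  qed
qed


theorem lemma1:
  fixes n :: nat and xs f :: "nat \<Rightarrow> nat" and D :: "((nat \<Rightarrow> nat) \<times> 'b) multiset" and i :: nat
  assumes "n \<ge> 1"
    and "binvec n xs"
    and "binvec n f"
    and "D \<noteq> {#}"
    and "\<forall>(x, y) \<in># D. binvec n x"
    and "i \<in> {1..n}"
  shows "shap n xs D (Psi n f) i =
    - (2 * real (f i) / real (size D)) *
      (\<Sum>\<^sub># (image_mset (\<lambda>(x, y).
          (if x i \<noteq> xs i then 1 else 0) * Psi n f x *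
          (let A = {j \<in> {1..n}. x j \<noteq> xs j \<and> j \<noteq> i \<and> f j = 1}
           in real ((card A + 1) mod 2) / real (card A + 1))) D))"
proof -
  let ?T = "\<lambda>(x::nat\<Rightarrow>nat, y::'b).
          (if x i \<noteq> xs i then 1 else 0) * Psi n f x *
          (let A = {j \<in> {1..n}. x j \<noteq> xs j \<and> j \<noteq> i \<and> f j = 1}
           in real ((card A + 1) mod 2) / real (card A + 1))"
  let ?c = "\<lambda>S. fact (card S) * fact (n - card S - 1) / fact n :: real"
  let ?g1 = "\<lambda>S (x::nat\<Rightarrow>nat, y::'b). Psi n f (merge (insert i S) xs x)"
  let ?g0 = "\<lambda>S (x::nat\<Rightarrow>nat, y::'b). Psi n f (merge S xs x)"
  have "shap n xs D (Psi n f) i = (\<Sum>S\<in>Pow ({1..n} - {i}). ?c S *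
      (\<Sum>\<^sub># (image_mset (?g1 S) D) / real (size D) - \<Sum>\<^sub># (image_mset (?g0 S) D) / real (size D)))"
    unfolding shap_def vfun_def by simp
  also have "\<dots> = \<Sum>\<^sub># (image_mset (\<lambda>p. \<Sum>S\<in>Pow ({1..n} - {i}). ?c S * (?g1 S p - ?g0 S p)) D) / real (size D)"
    by (rule swap_lemma)
  also have "image_mset (\<lambda>p. \<Sum>S\<in>Pow ({1..n} - {i}). ?c S * (?g1 S p - ?g0 S p)) D
      = image_mset (\<lambda>p. - 2 * real (f i) * ?T p) D"
  proof (rule image_mset_cong)
    fix p assume "p \<in># D"
    then obtain x y where p: "p = (x, y)" and x: "binvec n x" using assms(5) by (cases p) auto
    show "(\<Sum>S\<in>Pow ({1..n} - {i}). ?c S * (?g1 S p - ?g0 S p)) = - 2 * real (f i) * ?T p"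
      unfolding p using pointwise[OF assms(1) x assms(2) assms(3) assms(6)] by simp
  qed
  also have "\<Sum>\<^sub># (image_mset (\<lambda>p. - 2 * real (f i) * ?T p) D) = - 2 * real (f i) * \<Sum>\<^sub># (image_mset ?T D)"
    by (rule sum_mset_distrib_left[symmetric])
  finally show ?thesis by simp
qed

end
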